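(* Let $f:\mathbb{R}^n\to\mathbb{R}$ be twice continuously differentiable, $\varphi:\mathbb{R}^n\to\mathbb{R}$ polyhedral convex (a pointwise maximum of finitely many affine functions), $\psi=f+\varphi$, and suppose $\psi$ can be truncated with sets $\mathbb{R}^n=S_0\supset\cdots\supset S_m$. Let $x^*$ be a stationary point of $\psi$ with $x^*\in S_{i^*}\setminus S_{i^*+1}$ ($S_{m+1}=\emptyset$). Assume (C.1) $\varphi$ is partly smooth at $x^*$ relative to an affine subspace $\mathcal{M}$ and $B_r(x^* )\cap S_{i^*}=B_r(x^* )\cap\mathcal{M}$ for all $r\in(0,\Gamma(x^* ))$; and (C.3) $-\nabla f(x^* )\in\mathrm{ri}\,\partial\varphi(x^* )$. Let $\Lambda=\lambda I$ with $\lambda>0$. Then there exists $r_0\in(0,\Gamma(x^* ))$ such that for every $x\in B_{r_0}(x^* )\cap\mathcal{M}$, with $z=\tau(x)$ and $V=\mathcal{D}\mathrm{prox}^{\Lambda}_{\varphi}(z)$ the derivative of $\mathrm{prox}^{\Lambda}_{\varphi}$ at $z$, $$V\,\mathcal{D}F^{\Lambda}_{\mathrm{nor}}(z)=\nabla^2_{\mathcal{M}}\psi(x).$$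
   Context: $\|\cdot\|$ Euclidean norm, $B_r(x)$ open ball, $\mathrm{ri}$ relative interior, $\mathcal{D}$ the (Fréchet) derivative. $\partial\psi(x)=\nabla f(x)+\partial\varphi(x)$, stationary means $0\in\partial\psi(x)$. $\mathrm{prox}^{\Lambda}_{\varphi}(z)=\arg\min_y\varphi(y)+\frac12(y-z)^T\Lambda(y-z)$; normal map $F^{\Lambda}_{\mathrm{nor}}(z)=\nabla f(\mathrm{prox}^{\Lambda}_{\varphi}(z))+\Lambda(z-\mathrm{prox}^{\Lambda}_{\varphi}(z))$; $\tau(x)=x+\Lambda^{-1}\mathbf{P}_{\partial\varphi(x)}(-\nabla f(x))$ with $\mathbf{P}_C$ the orthogonal projection onto $C$. For $\|d\|=1$, $\Gamma_{\max}(x,d)=\sup\{T>0: t\mapsto\psi(x+td)\text{ is }C^1\text{ on }(0,T)\}$ and $\Gamma(x)=\inf_{\|d\|=1}\Gamma_{\max}(x,d)$. $\psi$ can be truncated means there are sets $\mathbb{R}^n=S_0\supset\cdots\supset S_m$, $\delta\in(0,\infty]$, $\kappa>0$ and $T:\mathbb{R}^n\times(0,\delta]\to\mathbb{R}^n$ with (i) $\Gamma\ge\delta$ on $S_m$; (ii) for $a\in(0,\delta]$, $x\in S_i\setminus S_{i+1}$, $i<m$: if $\Gamma(x)\ge a$ then $T(x,a)=x$, else $T(x,a)\in S_{i+1}$, $\Gamma(T(x,a))\ge a$, $\|T(x,a)-x\|\le\kappa a$. Partial smoothness: a proper convex lsc $\varphi$ is partly smooth at $x$ relative to $\mathcal{M}\ni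 x$ if $\partial\varphi(x)\ne\emptyset$ and (i) $\mathcal{M}$ is a $C^2$-manifold around $x$ and $\varphi|_{\mathcal{M}}$ is $C^2$ around $x$; (ii) the tangent space $T_{\mathcal{M}}(x)$ equals $\mathrm{par}(\partial\varphi(x))^\perp$, $\mathrm{par}(A)=\mathrm{span}(A-A)$; (iii) $\partial\varphi$ is continuous at $x$ relative to $\mathcal{M}$. For affine $\mathcal{M}$ with direction space $T_{\mathcal{M}}$ and orthogonal projector $\mathbf{P}$ onto $T_{\mathcal{M}}$, the Riemannian Hessian $\nabla^2_{\mathcal{M}}\psi(x)$ at $x\in\mathcal{M}$ (where $\psi|_{\mathcal{M}}$ is $C^2$) is the symmetric $n\times n$ matrix with $\nabla^2_{\mathcal{M}}\psi(x)=\mathbf{P}\nabla^2_{\mathcal{M}}\psi(x)\mathbf{P}$ and $\xi^T\nabla^2_{\mathcal{M}}\psi(x)\eta=\frac{\partial^2}{\partial s\partial t}\psi(x+s\xi+t\eta)|_{s=t=0}$ for all $\xi,\eta\in T_{\mathcal{M}}$. *)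

theory Defs
  imports "HOL-Analysis.Analysis"
begin

(* Functions on R^n are modelled on an arbitrary Euclidean space 'a. *)

definition C2_on :: "'a::euclidean_space set \<Rightarrow> ('a \<Rightarrow> real) \<Rightarrow> bool" where
  "C2_on U g \<longleftrightarrow> open U \<and> (\<exists>g' :: 'a \<Rightarrow> ('a \<Rightarrow>\<^sub>L real). \<exists>g'' :: 'a \<Rightarrow> ('a \<Rightarrow>\<^sub>L ('a \<Rightarrow>\<^sub>L real)).
     (\<forall>y\<in>U. (g has_derivative blinfun_apply (g' y)) (at y)) \<and>
     (\<forall>y\<in>U. (g' has_derivative blinfun_apply (g'' y)) (at y)) \<and>
     continuous_on U g'')"

definition grad :: "('a::euclidean_space \<Rightarrow> real) \<Rightarrow> 'a \<Rightarrow> 'a" where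
  "grad f x = (THE v. (f has_derivative (\<lambda>h. v \<bullet> h)) (at x))"

definition polyhedral_convex :: "('a::euclidean_space \<Rightarrow> real) \<Rightarrow> bool" where
  "polyhedral_convex \<phi> \<longleftrightarrow> (\<exists>A :: ('a \<times> real) set. finite A \<and> A \<noteq> {} \<and>
     (\<forall>x. \<phi> x = Max ((\<lambda>(a, b). a \<bullet> x + b) ` A)))"

definition subdiff :: "('a::euclidean_space \<Rightarrow> real) \<Rightarrow> 'a \<Rightarrow> 'a set" where
  "subdiff \<phi> x = {g. \<forall>y. \<phi> y \<ge> \<phi> x + g \<bullet> (y - x)}"

definition psubdiff :: "('a::euclidean_space \<Rightarrow> real) \<Rightarrow> ('a \<Rightarrow> real) \<Rightarrow> 'a \<Rightarrow> 'a set" where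
  "psubdiff f \<phi> x = (\<lambda>g. grad f x + g) ` subdiff \<phi> x"

definition stationary :: "('a::euclidean_space \<Rightarrow> real) \<Rightarrow> ('a \<Rightarrow> real) \<Rightarrow> 'a \<Rightarrow> bool" where
  "stationary f \<phi> x \<longleftrightarrow> 0 \<in> psubdiff f \<phi> x"

definition prox :: "('a::euclidean_space \<Rightarrow> 'a) \<Rightarrow> ('a \<Rightarrow> real) \<Rightarrow> 'a \<Rightarrow> 'a" where
  "prox \<Lambda> \<phi> z = (THE y. \<forall>w. \<phi> y + (1/2) * ((y - z) \<bullet> \<Lambda> (y - z))
                              \<le> \<phi> w + (1/2) * ((w - z) \<bullet> \<Lambda> (w - z)))"

definition Fnor :: "('a::euclidean_space \<Rightarrow> 'a) \<Rightarrow> ('a \<Rightarrow> real) \<Rightarrow> ('a \<Rightarrow> real) \<Rightarrow> 'a \<Rightarrow> 'a" where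
  "Fnor \<Lambda> f \<phi> z = grad f (prox \<Lambda> \<phi> z) + \<Lambda> (z - prox \<Lambda> \<phi> z)"

definition tau :: "('a::euclidean_space \<Rightarrow> 'a) \<Rightarrow> ('a \<Rightarrow> real) \<Rightarrow> ('a \<Rightarrow> real) \<Rightarrow> 'a \<Rightarrow> 'a" where
  "tau \<Lambda> f \<phi> x = x + inv \<Lambda> (closest_point (subdiff \<phi> x) (- grad f x))"

definition Gamma_max :: "('a::euclidean_space \<Rightarrow> real) \<Rightarrow> 'a \<Rightarrow> 'a \<Rightarrow> ereal" where
  "Gamma_max \<psi> x d = Sup {ereal T | T. T > 0 \<and> (\<lambda>t. \<psi> (x + t *\<^sub>R d)) C1_differentiable_on {0<..<T}}"

definition Gamma :: "('a::euclidean_space \<Rightarrow> real) \<Rightarrow> 'a \<Rightarrow> ereal" where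
  "Gamma \<psi> x = Inf {Gamma_max \<psi> x d | d. norm d = 1}"

definition truncatable :: "('a::euclidean_space \<Rightarrow> real) \<Rightarrow> (nat \<Rightarrow> 'a set) \<Rightarrow> nat \<Rightarrow> bool" where
  "truncatable \<psi> S m \<longleftrightarrow> S 0 = UNIV \<and> (\<forall>i<m. S (Suc i) \<subseteq> S i) \<and>
     (\<exists>(\<delta>::ereal) (\<kappa>::real) (T :: 'a \<Rightarrow> real \<Rightarrow> 'a). \<delta> > 0 \<and> \<kappa> > 0 \<and>
        (\<forall>x\<in>S m. Gamma \<psi> x \<ge> \<delta>) \<and>
        (\<forall>a. 0 < a \<and> ereal a \<le> \<delta> \<longrightarrow> (\<forall>i<m. \<forall>x\<in>S i - S (Suc i).
            (Gamma \<psi> x \<ge> ereal a \<longrightarrow> T x a = x) \<and>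
            (\<not> Gamma \<psi> x \<ge> ereal a \<longrightarrow>
               T x a \<in> S (Suc i) \<and> Gamma \<psi> (T x a) \<ge> ereal a \<and> norm (T x a - x) \<le> \<kappa> * a))))"

definition dirsp :: "'a::euclidean_space set \<Rightarrow> 'a set" where
  "dirsp M = {y - z | y z. y \<in> M \<and> z \<in> M}"

definition projM :: "'a::euclidean_space set \<Rightarrow> 'a \<Rightarrow> 'a" where
  "projM M v = closest_point (dirsp M) v"

definition par :: "'a::euclidean_space set \<Rightarrow> 'a set" where
  "par A = span {a - b | a b. a \<in> A \<and> b \<in> A}"

(* phi restricted to the affine set M is C^2 around x: x + u, u in the direction space *)
definition C2_restr_around :: "('a::euclidean_space \<Rightarrow> real) \<Rightarrow> 'a set \<Rightarrow> 'a \<Rightarrow> bool" where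
  "C2_restr_around \<phi> M x \<longleftrightarrow> (\<exists>U. 0 \<in> U \<and> C2_on U (\<lambda>u. \<phi> (x + projM M u)))"

(* continuity (Painleve-Kuratowski: inner and outer semicontinuity) of subdiff phi at x relative to M *)
definition subdiff_cont_rel :: "('a::euclidean_space \<Rightarrow> real) \<Rightarrow> 'a set \<Rightarrow> 'a \<Rightarrow> bool" where
  "subdiff_cont_rel \<phi> M x \<longleftrightarrow>
     (\<forall>v\<in>subdiff \<phi> x. \<forall>e>0. eventually (\<lambda>y. \<exists>w\<in>subdiff \<phi> y. dist w v < e) (at x within M)) \<and>
     (\<forall>v. (\<forall>e>0. \<forall>d>0. \<exists>y\<in>M \<inter> ball x d. \<exists>w\<in>subdiff \<phi> y. dist w v < e) \<longrightarrow> v \<in> subdiff \<phi> x)"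

definition partly_smooth_affine :: "('a::euclidean_space \<Rightarrow> real) \<Rightarrow> 'a \<Rightarrow> 'a set \<Rightarrow> bool" where
  "partly_smooth_affine \<phi> x M \<longleftrightarrow> affine M \<and> x \<in> M \<and> subdiff \<phi> x \<noteq> {} \<and>
     C2_restr_around \<phi> M x \<and>
     dirsp M = orthogonal_comp (par (subdiff \<phi> x)) \<and>
     subdiff_cont_rel \<phi> M x"

definition is_riem_hessian :: "'a::euclidean_space set \<Rightarrow> ('a \<Rightarrow> real) \<Rightarrow> 'a \<Rightarrow> ('a \<Rightarrow> 'a) \<Rightarrow> bool" where
  "is_riem_hessian M \<psi> x H \<longleftrightarrow> linear H \<and> (\<forall>u v. H u \<bullet> v = u \<bullet> H v) \<and>
     H = projM M \<circ> H \<circ> projM M \<and>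
     (\<forall>\<xi>\<in>dirsp M. \<forall>\<eta>\<in>dirsp M. \<exists>g. eventually (\<lambda>s.
          ((\<lambda>t. \<psi> (x + s *\<^sub>R \<xi> + t *\<^sub>R \<eta>)) has_real_derivative g s) (at 0)) (nhds 0) \<and>
        (g has_real_derivative (\<xi> \<bullet> H \<eta>)) (at 0))"

end

theory Submission
  imports Defs
begin

lemma mvt_line:
  fixes F :: "'a::euclidean_space \<Rightarrow> real"
  assumes d: "\<And>y. (F has_derivative F' y) (at y)"
  shows "\<exists>t\<in>{0..1}. F (a + v) - F a = F' (a + t *\<^sub>R v) v"
proof -
  have "\<And>t. ((\<lambda>t. F (a + t *\<^sub>R v)) has_derivative (\<lambda>s. F' (a + t *\<^sub>R v) (s *\<^sub>R v))) (at t within {0..1})"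
  proof -
    fix t
    have "((\<lambda>t. a + t *\<^sub>R v) has_derivative (\<lambda>s. s *\<^sub>R v)) (at t within {0..1})"
      by (auto intro!: derivative_eq_intros)
    from has_derivative_in_compose[OF this d[of "a + t *\<^sub>R v", THEN has_derivative_at_withinI]]
    show "?thesis t" by (simp add: o_def)
  qed
  from mvt_very_simple[of 0 1, OF _ this] show ?thesis by auto
qed

lemma blin_left: "bounded_linear (\<lambda>F::'a::real_normed_vector \<Rightarrow>\<^sub>L 'b::real_normed_vector. blinfun_apply F v)"
  using bounded_bilinear.bounded_linear_left[OF bounded_bilinear_blinfun_apply] .

lemma sym_step:
  fixes g :: "'a::euclidean_space \<Rightarrow> real" and g' :: "'a \<Rightarrow> 'a \<Rightarrow>\<^sub>L real"
    and g'' :: "'a \<Rightarrow> 'a \<Rightarrow>\<^sub>L 'a \<Rightarrow>\<^sub>L real"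
  assumes d1: "\<And>y. (g has_derivative blinfun_apply (g' y)) (at y)"
    and d2: "\<And>y. (g' has_derivative blinfun_apply (g'' y)) (at y)"
  shows "\<exists>\<xi>. dist \<xi> x \<le> \<bar>e\<bar> * (norm h + norm k) \<and>
    g (x + e *\<^sub>R h + e *\<^sub>R k) - g (x + e *\<^sub>R h) - g (x + e *\<^sub>R k) + g x
      = e^2 * blinfun_apply (blinfun_apply (g'' \<xi>) h) k"
proof -
  define D where "D y = g (y + e *\<^sub>R h) - g y" for y
  have dD: "(D has_derivative (\<lambda>d. g' (y + e *\<^sub>R h) d - g' y d)) (at y)" for y
  proof -
    have "((\<lambda>y. y + e *\<^sub>R h) has_derivative (\<lambda>d. d)) (at y)"
      by (auto intro!: derivative_eq_intros)
    from has_derivative_compose[OF this d1]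
    have "((\<lambda>y. g (y + e *\<^sub>R h)) has_derivative (\<lambda>d. g' (y + e *\<^sub>R h) d)) (at y)" by simp
    from has_derivative_diff[OF this d1[of y]] show ?thesis unfolding D_def .
  qed
  obtain \<theta> where th: "\<theta>\<in>{0..1}" and eq1: "D (x + e *\<^sub>R k) - D x =
      g' (x + \<theta> *\<^sub>R (e *\<^sub>R k) + e *\<^sub>R h) (e *\<^sub>R k) - g' (x + \<theta> *\<^sub>R (e *\<^sub>R k)) (e *\<^sub>R k)"
    using mvt_line[of D, OF dD, of x "e *\<^sub>R k"] by auto
  define a where "a = x + \<theta> *\<^sub>R (e *\<^sub>R k)"
  define F2 where "F2 y = blinfun_apply (g' y) (e *\<^sub>R k)" for y
  have dF2: "(F2 has_derivative (\<lambda>d. g'' y d (e *\<^sub>R k))) (at y)" for y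
    unfolding F2_def using bounded_linear.has_derivative[OF blin_left d2[of y]] .
  obtain \<sigma> where sg: "\<sigma>\<in>{0..1}" and eq2: "F2 (a + e *\<^sub>R h) - F2 a =
      g'' (a + \<sigma> *\<^sub>R (e *\<^sub>R h)) (e *\<^sub>R h) (e *\<^sub>R k)"
    using mvt_line[of F2, OF dF2, of a "e *\<^sub>R h"] by auto
  define \<xi> where "\<xi> = a + \<sigma> *\<^sub>R (e *\<^sub>R h)"
  have "g (x + e *\<^sub>R h + e *\<^sub>R k) - g (x + e *\<^sub>R h) - g (x + e *\<^sub>R k) + g x
      = D (x + e *\<^sub>R k) - D x" unfolding D_def by (simp add: algebra_simps)
  also have "\<dots> = F2 (a + e *\<^sub>R h) - F2 a" using eq1 unfolding F2_def a_def by (simp add: algebra_simps)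
  also have "\<dots> = e^2 * g'' \<xi> h k" unfolding eq2 \<xi>_def
    by (simp add: blinfun.scaleR_left blinfun.scaleR_right power2_eq_square)
  finally have E: "g (x + e *\<^sub>R h + e *\<^sub>R k) - g (x + e *\<^sub>R h) - g (x + e *\<^sub>R k) + g x = e^2 * g'' \<xi> h k" .
  have "dist \<xi> x = norm (\<theta> *\<^sub>R (e *\<^sub>R k) + \<sigma> *\<^sub>R (e *\<^sub>R h))"
    unfolding \<xi>_def a_def dist_norm by (simp add: algebra_simps)
  also have "\<dots> \<le> norm (\<theta> *\<^sub>R (e *\<^sub>R k)) + norm (\<sigma> *\<^sub>R (e *\<^sub>R h))" by (rule norm_triangle_ineq)
  also have "\<dots> = \<theta> * \<bar>e\<bar> * norm k + \<sigma> * \<bar>e\<bar> * norm h" using th sg by (simp add: abs_mult)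
  also have "\<dots> \<le> \<bar>e\<bar> * norm k + \<bar>e\<bar> * norm h"
    using th sg by (intro add_mono mult_right_mono) (auto intro: mult_left_le_one_le)
  finally have "dist \<xi> x \<le> \<bar>e\<bar> * (norm h + norm k)" by (simp add: algebra_simps)
  with E show ?thesis by blast
qed

lemma blin2_bound:
  fixes B :: "'a::real_normed_vector \<Rightarrow>\<^sub>L 'b::real_normed_vector \<Rightarrow>\<^sub>L real"
  shows "\<bar>B h k\<bar> \<le> norm B * norm h * norm k"
proof -
  have "\<bar>B h k\<bar> \<le> norm (B h) * norm k" using norm_blinfun[of "B h" k] by simp
  also have "\<dots> \<le> norm B * norm h * norm k"
    by (intro mult_right_mono norm_blinfun) auto
  finally show ?thesis .
qed

lemma sym2:
  fixes g :: "'a::euclidean_space \<Rightarrow> real" and g' :: "'a \<Rightarrow> 'a \<Rightarrow>\<^sub>L real"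
    and g'' :: "'a \<Rightarrow> 'a \<Rightarrow>\<^sub>L 'a \<Rightarrow>\<^sub>L real"
  assumes d1: "\<And>y. (g has_derivative blinfun_apply (g' y)) (at y)"
    and d2: "\<And>y. (g' has_derivative blinfun_apply (g'' y)) (at y)"
    and c: "continuous_on UNIV g''"
  shows "blinfun_apply (blinfun_apply (g'' x) h) k = g'' x k h"
proof -
  define d where "d = g'' x h k - g'' x k h"
  define c0 where "c0 = norm h * norm k"
  have c0: "c0 \<ge> 0" unfolding c0_def by simp
  have bnd: "\<bar>d\<bar> \<le> 2 * ep * c0" if ep: "ep > 0" for ep
  proof -
    have "isCont g'' x" using c by (simp add: continuous_on_eq_continuous_at)
    then obtain \<delta> where dl: "\<delta> > 0" and dlc: "\<And>\<xi>. dist \<xi> x < \<delta> \<Longrightarrow> dist (g'' \<xi>) (g'' x) < ep"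
      using ep unfolding continuous_at_eps_delta by blast
    define e where "e = \<delta> / (2 * (norm h + norm k + 1))"
    have e: "e > 0" using dl unfolding e_def by (intro divide_pos_pos) (auto intro!: add_nonneg_pos mult_pos_pos)
    have ebd: "\<bar>e\<bar> * (norm h + norm k) < \<delta>"
    proof -
      have "\<bar>e\<bar> * (norm h + norm k) \<le> e * (norm h + norm k + 1)" using e by simp
      also have "\<dots> = \<delta> / 2"
      proof -
        have "norm h + norm k + 1 > 0" by (simp add: add_nonneg_pos)
        then show ?thesis unfolding e_def by (simp add: field_simps)
      qed
      finally show ?thesis using dl by simp
    qed
    obtain \<xi>1 where x1: "dist \<xi>1 x \<le> \<bar>e\<bar> * (norm h + norm k)" and E1:
      "g (x + e *\<^sub>R h + e *\<^sub>R k) - g (x + e *\<^sub>R h) - g (x + e *\<^sub>R k) + g x = e^2 * g'' \<xi>1 h k"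
      using sym_step[OF d1 d2, of x e h k] by blast
    obtain \<xi>2 where x2: "dist \<xi>2 x \<le> \<bar>e\<bar> * (norm k + norm h)" and E2:
      "g (x + e *\<^sub>R k + e *\<^sub>R h) - g (x + e *\<^sub>R k) - g (x + e *\<^sub>R h) + g x = e^2 * g'' \<xi>2 k h"
      using sym_step[OF d1 d2, of x e k h] by blast
    have "e^2 * g'' \<xi>1 h k = e^2 * g'' \<xi>2 k h" using E1 E2 by (simp add: algebra_simps)
    then have eq: "g'' \<xi>1 h k = g'' \<xi>2 k h" using e by simp
    have n1: "norm (g'' x - g'' \<xi>1) < ep" using dlc[of \<xi>1] x1 ebd by (simp add: dist_norm norm_minus_commute)
    have n2: "norm (g'' x - g'' \<xi>2) < ep" using dlc[of \<xi>2] x2 ebd by (simp add: dist_norm norm_minus_commute add.commute)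
    have "\<bar>g'' x h k - g'' \<xi>1 h k\<bar> \<le> ep * c0"
    proof -
      have "\<bar>g'' x h k - g'' \<xi>1 h k\<bar> = \<bar>(g'' x - g'' \<xi>1) h k\<bar>" by (simp add: blinfun.diff_left)
      also have "\<dots> \<le> norm (g'' x - g'' \<xi>1) * norm h * norm k" by (rule blin2_bound)
      also have "\<dots> \<le> ep * c0" unfolding c0_def using n1
        by (simp add: mult.assoc mult_right_mono)
      finally show ?thesis .
    qed
    moreover have "\<bar>g'' \<xi>2 k h - g'' x k h\<bar> \<le> ep * c0"
    proof -
      have "\<bar>g'' \<xi>2 k h - g'' x k h\<bar> = \<bar>(g'' x - g'' \<xi>2) k h\<bar>" by (simp add: blinfun.diff_left)
      also have "\<dots> \<le> norm (g'' x - g'' \<xi>2) * norm k * norm h" by (rule blin2_bound)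
      also have "\<dots> = norm (g'' x - g'' \<xi>2) * c0" unfolding c0_def by simp
      also have "\<dots> \<le> ep * c0" using n2 c0 by (simp add: mult_right_mono)
      finally show ?thesis .
    qed
    ultimately show ?thesis unfolding d_def using eq by linarith
  qed
  have "d = 0"
  proof (rule ccontr)
    assume "d \<noteq> 0"
    define ep where "ep = \<bar>d\<bar> / (4 * (c0 + 1))"
    have ep: "ep > 0" using \<open>d \<noteq> 0\<close> c0 unfolding ep_def by simp
    have "2 * ep * c0 < \<bar>d\<bar>"
    proof -
      have "2 * ep * c0 = \<bar>d\<bar> * (2 * c0) / (4 * (c0 + 1))" unfolding ep_def by simp
      also have "\<dots> < \<bar>d\<bar>" using \<open>d \<noteq> 0\<close> c0 by (simp add: field_simps add_pos_nonneg)
      finally show ?thesis .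
    qed
    with bnd[OF ep] show False by simp
  qed
  then show ?thesis unfolding d_def by simp
qed

lemma proj_char:
  fixes T :: "'a::euclidean_space set"
  assumes T: "subspace T" and p: "p \<in> T" and o: "\<And>w. w \<in> T \<Longrightarrow> (u - p) \<bullet> w = 0"
  shows "closest_point T u = p"
proof -
  have "p = closest_point T u"
  proof (rule closest_point_unique)
    show "convex T" using T by (rule subspace_imp_convex)
    show "closed T" using T by (rule closed_subspace)
    show "p \<in> T" by fact
    show "\<forall>z\<in>T. dist u p \<le> dist u z"
    proof
      fix z assume z: "z \<in> T"
      have "p - z \<in> T" using T p z by (rule subspace_diff)
      then have "(u - p) \<bullet> (p - z) = 0" by (rule o)
      then have "(dist u z)^2 = (dist u p)^2 + (norm (p - z))^2"
        unfolding dist_norm power2_norm_eq_inner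
        by (simp add: algebra_simps inner_commute)
      then have "(dist u p)^2 \<le> (dist u z)^2" by simp
      then show "dist u p \<le> dist u z" by (simp add: power2_le_iff_abs_le)
    qed
  qed
  then show ?thesis by simp
qed

lemma proj_props:
  fixes T :: "'a::euclidean_space set"
  assumes T: "subspace T"
  shows "closest_point T u \<in> T \<and> (\<forall>w\<in>T. (u - closest_point T u) \<bullet> w = 0)"
proof -
  obtain y z where y: "y \<in> span T" and z: "\<And>w. w \<in> span T \<Longrightarrow> orthogonal z w" and u: "u = y + z"
    using orthogonal_subspace_decomp_exists by blast
  have sT: "span T = T" using T by (simp add: span_eq_iff)
  have "closest_point T u = y"
    apply (rule proj_char[OF T])
    using y sT apply simp
    using z sT u by (simp add: orthogonal_def)
  then show ?thesis using y z sT u by (simp add: orthogonal_def)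
qed

lemma proj_in: "subspace T \<Longrightarrow> closest_point T u \<in> (T::'a::euclidean_space set)"
  using proj_props[of T u] by auto
lemma proj_orth: "subspace T \<Longrightarrow> w \<in> T \<Longrightarrow> (u - closest_point T u) \<bullet> w = 0" for T :: "'a::euclidean_space set"
  using proj_props[of T u] by auto

lemma proj_id: "subspace T \<Longrightarrow> w \<in> T \<Longrightarrow> closest_point T w = (w::'a::euclidean_space)"
  by (rule proj_char) auto

lemma proj_idem: "subspace T \<Longrightarrow> closest_point T (closest_point T u) = closest_point T (u::'a::euclidean_space)"
  by (rule proj_id) (auto intro: proj_in)

lemma proj_linear:
  fixes T :: "'a::euclidean_space set"
  assumes T: "subspace T"
  shows "linear (closest_point T)"
proof (rule linearI)
  fix u v
  show "closest_point T (u + v) = closest_point T u + closest_point T v"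
    apply (rule proj_char[OF T])
    using T proj_in apply (blast intro: subspace_add)
    using proj_orth[OF T, of _ u] proj_orth[OF T, of _ v] by (simp add: algebra_simps inner_diff_left inner_add_left)
next
  fix c::real and u
  show "closest_point T (c *\<^sub>R u) = c *\<^sub>R closest_point T u"
    apply (rule proj_char[OF T])
    using T proj_in apply (blast intro: subspace_scale)
  proof -
    fix w assume w: "w \<in> T"
    have "c *\<^sub>R u - c *\<^sub>R closest_point T u = c *\<^sub>R (u - closest_point T u)"
      by (simp add: scaleR_diff_right)
    then show "(c *\<^sub>R u - c *\<^sub>R closest_point T u) \<bullet> w = 0"
      using proj_orth[OF T w, of u] by simp
  qed
qed

lemma proj_sa:
  fixes T :: "'a::euclidean_space set"
  assumes T: "subspace T"
  shows "closest_point T u \<bullet> v = u \<bullet> closest_point T v"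
proof -
  have "closest_point T u \<bullet> v = closest_point T u \<bullet> closest_point T v"
    using proj_orth[OF T proj_in[OF T], of v u] by (simp add: inner_diff_right inner_commute)
  also have "\<dots> = u \<bullet> closest_point T v"
    using proj_orth[OF T proj_in[OF T], of u v] by (simp add: inner_diff_left)
  finally show ?thesis .
qed

lemma proj_perp: "subspace T \<Longrightarrow> u - closest_point T u \<in> orthogonal_comp (T::'a::euclidean_space set)"
  using proj_orth[of T _ u] unfolding orthogonal_comp_def orthogonal_def by (simp add: inner_commute)

lemma proj_norm:
  fixes T :: "'a::euclidean_space set"
  assumes T: "subspace T"
  shows "norm (closest_point T u) \<le> norm u"
proof -
  have "(norm (closest_point T u))^2 = closest_point T u \<bullet> u"
    using proj_sa[OF T, of "closest_point T u" u] proj_idem[OF T]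
    by (simp add: power2_norm_eq_inner inner_commute)
  also have "\<dots> \<le> norm (closest_point T u) * norm u" using Cauchy_Schwarz_ineq2[of "closest_point T u" u] by simp
  finally have "(norm (closest_point T u))^2 \<le> norm (closest_point T u) * norm u" .
  then have h: "norm (closest_point T u) * norm (closest_point T u) \<le> norm (closest_point T u) * norm u"
    by (simp add: power2_eq_square)
  show ?thesis
  proof (rule ccontr)
    assume "\<not> ?thesis"
    then have "norm u < norm (closest_point T u)" by simp
    moreover then have "norm (closest_point T u) > 0" using norm_ge_zero[of u] by linarith
    ultimately have "norm (closest_point T u) * norm u < norm (closest_point T u) * norm (closest_point T u)"
      by (rule mult_strict_left_mono)
    with h show False by simp
  qed
qed

lemma riesz:
  fixes L :: "'a::euclidean_space \<Rightarrow> real"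
  assumes L: "linear L"
  shows "L h = (\<Sum>b\<in>Basis. L b *\<^sub>R b) \<bullet> h"
proof -
  have "L h = L (\<Sum>b\<in>Basis. (h \<bullet> b) *\<^sub>R b)" by (simp add: euclidean_representation)
  also have "\<dots> = (\<Sum>b\<in>Basis. (h \<bullet> b) * L b)"
    by (simp add: linear_sum[OF L] linear_scale[OF L])
  also have "\<dots> = (\<Sum>b\<in>Basis. L b *\<^sub>R b) \<bullet> h"
    by (simp add: inner_sum_left mult.commute inner_commute[of h])
  finally show ?thesis .
qed

lemma grad_eq:
  fixes f :: "'a::euclidean_space \<Rightarrow> real"
  assumes "(f has_derivative (\<lambda>h. v \<bullet> h)) (at y)"
  shows "grad f y = v"
  unfolding grad_def
proof (rule the_equality)
  show "(f has_derivative (\<bullet>) v) (at y)" using assms by (simp add: fun_eq_iff)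
  fix v' assume "(f has_derivative (\<bullet>) v') (at y)"
  from has_derivative_unique[OF this assms] have "\<And>h. v' \<bullet> h = v \<bullet> h" by (metis)
  from this[of "v' - v"] have "(v' - v) \<bullet> (v' - v) = 0" by (simp add: inner_diff_left)
  then show "v' = v" by simp
qed

lemma grad_series:
  fixes g' :: "'a::euclidean_space \<Rightarrow> 'a \<Rightarrow>\<^sub>L real"
    and g'' :: "'a \<Rightarrow> 'a \<Rightarrow>\<^sub>L 'a \<Rightarrow>\<^sub>L real"
  assumes d2: "\<And>y. (g' has_derivative blinfun_apply (g'' y)) (at y)"
  shows "((\<lambda>y. \<Sum>b\<in>Basis. g' y b *\<^sub>R b) has_derivative (\<lambda>h. \<Sum>b\<in>Basis. g'' y h b *\<^sub>R b)) (at y)"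
proof -
  have "\<And>b. ((\<lambda>y. g' y b) has_derivative (\<lambda>h. g'' y h b)) (at y)"
    using bounded_linear.has_derivative[OF blin_left d2[of y]] .
  then show ?thesis
    by (auto intro!: has_derivative_sum has_derivative_scaleR_left)
qed

lemma poly_ge:
  assumes fA: "finite A" and phi: "\<And>x. \<phi> x = Max ((\<lambda>(a, b). a \<bullet> x + b) ` A)"
    and ab: "(a, b) \<in> A"
  shows "a \<bullet> y + b \<le> \<phi> (y::'a::euclidean_space)"
  unfolding phi using fA ab by (intro Max_ge) force+

lemma poly_eq:
  assumes fA: "finite A" and phi: "\<And>x. \<phi> x = Max ((\<lambda>(a, b). a \<bullet> x + b) ` A)"
    and ab: "(aj, bj) \<in> A" and le: "\<And>a b. (a, b) \<in> A \<Longrightarrow> a \<bullet> y + b \<le> aj \<bullet> y + bj"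
  shows "\<phi> (y::'a::euclidean_space) = aj \<bullet> y + bj"
  unfolding phi using fA ab le by (intro Max_eqI) force+

lemma quad_id:
  fixes w y z :: "'a::real_inner"
  shows "(w - z) \<bullet> (w - z) = (w - y) \<bullet> (w - y) + 2 * ((w - y) \<bullet> (y - z)) + (y - z) \<bullet> (y - z)"
proof -
  have "w - z = (w - y) + (y - z)" by simp
  then have "(w - z) \<bullet> (w - z) = ((w - y) + (y - z)) \<bullet> ((w - y) + (y - z))" by simp
  also have "\<dots> = (w - y) \<bullet> (w - y) + 2 * ((w - y) \<bullet> (y - z)) + (y - z) \<bullet> (y - z)"
    by (simp only: inner_add_left inner_add_right inner_commute[of "y - z" "w - y"])
  finally show ?thesis .
qed

lemma prox_min:
  fixes \<phi> :: "'a::euclidean_space \<Rightarrow> real"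
  assumes lam: "lam > 0" and sg: "lam *\<^sub>R (z - y) \<in> subdiff \<phi> y"
  shows "prox (\<lambda>v. lam *\<^sub>R v) \<phi> z = y"
proof -
  have key: "\<phi> y + (1/2) * ((y - z) \<bullet> (lam *\<^sub>R (y - z))) + (lam/2) * ((w - y) \<bullet> (w - y))
      \<le> \<phi> w + (1/2) * ((w - z) \<bullet> (lam *\<^sub>R (w - z)))" for w
  proof -
    have "\<phi> w \<ge> \<phi> y + (lam *\<^sub>R (z - y)) \<bullet> (w - y)" using sg unfolding subdiff_def by auto
    moreover have "(w - z) \<bullet> (w - z) = (w - y) \<bullet> (w - y) + 2 * ((w - y) \<bullet> (y - z)) + (y - z) \<bullet> (y - z)"
      by (rule quad_id)
    moreover have "(lam *\<^sub>R (z - y)) \<bullet> (w - y) = - lam * ((w - y) \<bullet> (y - z))"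
      by (simp add: algebra_simps inner_diff_right inner_diff_left inner_commute)
    ultimately show ?thesis by (simp add: algebra_simps)
  qed
  show ?thesis
    unfolding prox_def
  proof (rule the_equality)
    show "\<forall>w. \<phi> y + 1 / 2 * ((y - z) \<bullet> lam *\<^sub>R (y - z)) \<le> \<phi> w + 1 / 2 * ((w - z) \<bullet> lam *\<^sub>R (w - z))"
    proof
      fix w
      have "0 \<le> (lam/2) * ((w - y) \<bullet> (w - y))" using lam by simp
      with key[of w] show "\<phi> y + 1 / 2 * ((y - z) \<bullet> lam *\<^sub>R (y - z)) \<le> \<phi> w + 1 / 2 * ((w - z) \<bullet> lam *\<^sub>R (w - z))"
        by linarith
    qed
    fix y' assume "\<forall>w. \<phi> y' + 1 / 2 * ((y' - z) \<bullet> lam *\<^sub>R (y' - z)) \<le> \<phi> w + 1 / 2 * ((w - z) \<bullet> lam *\<^sub>R (w - z))"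
    then have "\<phi> y' + 1 / 2 * ((y' - z) \<bullet> lam *\<^sub>R (y' - z)) \<le> \<phi> y + 1 / 2 * ((y - z) \<bullet> lam *\<^sub>R (y - z))" by blast
    with key[of y'] have "(lam/2) * ((y' - y) \<bullet> (y' - y)) \<le> 0" by linarith
    with lam have "(y' - y) \<bullet> (y' - y) \<le> 0" by (simp add: mult_le_0_iff)
    then have "(y' - y) \<bullet> (y' - y) = 0" using inner_ge_zero[of "y' - y"] by linarith
    then show "y' = y" by simp
  qed
qed

lemma tau_lam:
  assumes lam: "lam > 0"
  shows "tau (\<lambda>v. lam *\<^sub>R v) f \<phi> x = x + (1/lam) *\<^sub>R closest_point (subdiff \<phi> x) (- grad f x)"
proof -
  have "inv (\<lambda>v::'a. lam *\<^sub>R v) = (\<lambda>v. (1/lam) *\<^sub>R v)"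
    by (rule inv_unique_comp) (use lam in \<open>auto simp: fun_eq_iff\<close>)
  then show ?thesis unfolding tau_def by simp
qed

lemma subdiff_closed: "closed (subdiff \<phi> x)"
proof -
  have "subdiff \<phi> x = (\<Inter>y. {g. (y - x) \<bullet> g \<le> \<phi> y - \<phi> x})"
    unfolding subdiff_def by (auto simp: inner_commute algebra_simps)
  then show ?thesis by (auto intro!: closed_INT closed_halfspace_le)
qed

lemma aff_par:
  fixes C :: "'a::euclidean_space set"
  assumes p: "p \<in> C" and v: "v \<in> par C"
  shows "p + v \<in> affine hull C"
proof -
  let ?S = "span {x - p | x. x \<in> C - {p}}"
  have "{a - b | a b. a \<in> C \<and> b \<in> C} \<subseteq> ?S"
  proof
    fix u assume "u \<in> {a - b | a b. a \<in> C \<and> b \<in> C}"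
    then obtain a b where ab: "a \<in> C" "b \<in> C" "u = a - b" by blast
    have m: "c - p \<in> ?S" if "c \<in> C" for c
      using that by (cases "c = p") (auto intro: span_base span_zero)
    have "(a - p) - (b - p) \<in> ?S" by (intro span_diff m ab)
    then show "u \<in> ?S" using ab by simp
  qed
  then have "par C \<subseteq> ?S" unfolding par_def by (intro span_minimal) (auto intro: subspace_span)
  then have "v \<in> ?S" using v by blast
  then show ?thesis using affine_hull_span[OF p] by blast
qed

lemma line_deriv:
  fixes F :: "'a::real_normed_vector \<Rightarrow> real"
  assumes dF: "(F has_derivative F') (at p)" and p: "p = y + t0 *\<^sub>R v"
  shows "((\<lambda>t. F (y + t *\<^sub>R v)) has_real_derivative F' v) (at t0)"
proof -
  have l: "((\<lambda>t. y + t *\<^sub>R v) has_derivative (\<lambda>h. h *\<^sub>R v)) (at t0)"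
    by (auto intro!: derivative_eq_intros)
  have "(F has_derivative F') (at ((\<lambda>t. y + t *\<^sub>R v) t0))" using dF p by simp
  from has_derivative_compose[OF l this]
  have "((\<lambda>t. F (y + t *\<^sub>R v)) has_derivative (\<lambda>h. F' (h *\<^sub>R v))) (at t0)" .
  moreover have "(\<lambda>h. F' (h *\<^sub>R v)) = (*) (F' v)"
    using linear_scale[OF bounded_linear.linear[OF has_derivative_bounded_linear[OF dF]]]
    by (auto simp: fun_eq_iff)
  ultimately show ?thesis unfolding has_field_derivative_def by simp
qed

theorem lemma5p4:
  fixes f \<phi> :: "'a::euclidean_space \<Rightarrow> real"
    and S :: "nat \<Rightarrow> 'a set" and m i :: nat and xs :: 'a
    and M :: "'a set" and lam :: real
  assumes f_C2: "C2_on UNIV f"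
    and phi_poly: "polyhedral_convex \<phi>"
    and trunc: "truncatable (\<lambda>x. f x + \<phi> x) S m"
    and stat: "stationary f \<phi> xs"
    and i_le: "i \<le> m" and xs_in: "xs \<in> S i" and xs_notin: "i < m \<longrightarrow> xs \<notin> S (Suc i)"
    and C1_ps: "partly_smooth_affine \<phi> xs M"
    and C1_loc: "\<forall>r>0. ereal r < Gamma (\<lambda>x. f x + \<phi> x) xs \<longrightarrow>
                   ball xs r \<inter> S i = ball xs r \<inter> M"
    and C3: "- grad f xs \<in> rel_interior (subdiff \<phi> xs)"
    and lam_pos: "lam > 0"
  shows "\<exists>r0>0. ereal r0 < Gamma (\<lambda>x. f x + \<phi> x) xs \<and>
           (\<forall>x\<in>ball xs r0 \<inter> M.
              let \<Lambda> = (\<lambda>v. lam *\<^sub>R v); z = tau \<Lambda> f \<phi> x in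
              \<exists>V DF. (prox \<Lambda> \<phi> has_derivative V) (at z) \<and>
                     (Fnor \<Lambda> f \<phi> has_derivative DF) (at z) \<and>
                     is_riem_hessian M (\<lambda>y. f y + \<phi> y) x (V \<circ> DF))"
proof -
  obtain g' g'' where d1: "\<And>y. (f has_derivative blinfun_apply (g' y)) (at y)"
     and d2: "\<And>y. (g' has_derivative blinfun_apply (g'' y)) (at y)" and c2: "continuous_on UNIV g''"
    using f_C2 unfolding C2_on_def by blast
  define G where "G y = (\<Sum>b\<in>Basis. g' y b *\<^sub>R b)" for y
  define Hf where "Hf y h = (\<Sum>b\<in>Basis. g'' y h b *\<^sub>R b)" for y h
  have gG: "g' y h = G y \<bullet> h" for y h
    unfolding G_def by (rule riesz) (rule bounded_linear.linear[OF blinfun.bounded_linear_right])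
  have gradG: "grad f = G"
  proof
    fix y
    have "blinfun_apply (g' y) = (\<lambda>h. G y \<bullet> h)" using gG by (simp add: fun_eq_iff)
    then show "grad f y = G y" using d1[of y] by (intro grad_eq) simp
  qed
  have dG: "(G has_derivative Hf y) (at y)" for y
  proof -
    have "G = (\<lambda>y. \<Sum>b\<in>Basis. g' y b *\<^sub>R b)" unfolding G_def by simp
    moreover have "Hf y = (\<lambda>h. \<Sum>b\<in>Basis. g'' y h b *\<^sub>R b)" unfolding Hf_def by simp
    ultimately show ?thesis using grad_series[OF d2] by simp
  qed
  have HfI: "Hf y h \<bullet> k = g'' y h k" for y h k
    unfolding Hf_def by (rule riesz[symmetric]) (rule bounded_linear.linear[OF blinfun.bounded_linear_right])
  have Hsym: "Hf y h \<bullet> k = Hf y k \<bullet> h" for y h k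
    unfolding HfI using sym2[OF d1 d2 c2] by simp
  have Hbl: "bounded_linear (Hf y)" for y using dG[of y] by (rule has_derivative_bounded_linear)
  have contG: "continuous_on UNIV G"
    using dG by (meson differentiable_def differentiable_imp_continuous_on differentiable_on_def)
  obtain A where fA: "finite A" and Ane: "A \<noteq> {}" and phi: "\<And>x. \<phi> x = Max ((\<lambda>(a, b). a \<bullet> x + b) ` A)"
    using phi_poly unfolding polyhedral_convex_def by blast
  define C where "C = subdiff \<phi> xs"
  define T where "T = dirsp M"
  have affM: "affine M" and xsM: "xs \<in> M" and Cne: "C \<noteq> {}" and TC: "T = orthogonal_comp (par C)"
    using C1_ps unfolding partly_smooth_affine_def C_def T_def by auto
  have Tsub: "subspace T" unfolding TC by (rule subspace_orthogonal_comp)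
  have parsub: "subspace (par C)" unfolding par_def by (rule subspace_span)
  have perpT: "orthogonal_comp T = par C" unfolding TC using orthogonal_comp_self[OF parsub] .
  have Cclosed: "closed C" unfolding C_def by (rule subdiff_closed)
  have MT: "x + w \<in> M" if xw: "x \<in> M" "w \<in> T" for x w
  proof -
    obtain y y' where "y \<in> M" "y' \<in> M" "w = y - y'" using xw(2) unfolding T_def dirsp_def by blast
    then show ?thesis using mem_affine_3_minus[OF affM xw(1), of y y' 1] by simp
  qed
  have TM: "x - xs \<in> T" if "x \<in> M" for x using that xsM unfolding T_def dirsp_def by blast
  define P where "P = closest_point T"
  have projM_eq: "projM M = P" unfolding projM_def P_def T_def ..
  have Pl: "linear P" unfolding P_def by (rule proj_linear[OF Tsub])
  have Pbl: "bounded_linear P" using Pl by (simp add: linear_conv_bounded_linear)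
  define q0 where "q0 = - G xs"
  have q0ri: "q0 \<in> rel_interior C" using C3 unfolding q0_def C_def gradG .
  then obtain e where e: "e > 0" and eball: "ball q0 e \<inter> affine hull C \<subseteq> C"
    and q0C: "q0 \<in> C" unfolding mem_rel_interior_ball by blast
  have "\<phi> xs \<in> (\<lambda>(a, b). a \<bullet> xs + b) ` A" unfolding phi[of xs] using fA Ane by (intro Max_in) auto
  then obtain a0 b0 where a0A: "(a0, b0) \<in> A" and a0act: "a0 \<bullet> xs + b0 = \<phi> xs" by auto
  define J where "J = {(a, b). (a, b) \<in> A \<and> a \<bullet> xs + b = \<phi> xs}"
  have a0J: "(a0, b0) \<in> J" unfolding J_def using a0A a0act by simp
  have aC: "a \<in> C" if "(a, b) \<in> J" for a b
    unfolding C_def subdiff_def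
  proof (safe)
    fix y
    have "a \<bullet> y + b \<le> \<phi> y" using poly_ge[OF fA phi, of a b y] that unfolding J_def by simp
    then show "\<phi> xs + a \<bullet> (y - xs) \<le> \<phi> y" using that unfolding J_def by (simp add: inner_diff_right)
  qed
  have gT: "g \<bullet> w = a0 \<bullet> w" if "g \<in> C" "w \<in> T" for g w
  proof -
    have "g - a0 \<in> par C" unfolding par_def using that(1) aC[OF a0J] by (intro span_base) blast
    then have "(g - a0) \<bullet> w = 0" using that(2) unfolding TC orthogonal_comp_def orthogonal_def by blast
    then show ?thesis by (simp add: inner_diff_left)
  qed
  have aT: "a \<bullet> w = a0 \<bullet> w" if "(a, b) \<in> J" "w \<in> T" for a b w using gT[OF aC[OF that(1)] that(2)] .
  have ev: "eventually (\<lambda>y. \<forall>ab\<in>A - J. (\<lambda>(a, b). a \<bullet> y + b < a0 \<bullet> y + b0) ab) (nhds xs)"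
  proof (rule eventually_ball_finite)
    show "finite (A - J)" using fA by simp
    show "\<forall>ab\<in>A - J. eventually (\<lambda>y. (\<lambda>(a, b). a \<bullet> y + b < a0 \<bullet> y + b0) ab) (nhds xs)"
    proof
      fix ab0 assume ab0: "ab0 \<in> A - J"
      then obtain a b where abe: "ab0 = (a, b)" by (cases ab0) auto
      have ab: "(a, b) \<in> A" "(a, b) \<notin> J" using ab0 abe by auto
      have "a \<bullet> xs + b \<le> \<phi> xs" using poly_ge[OF fA phi ab(1)] .
      with ab have lt: "0 < (a0 \<bullet> xs + b0) - (a \<bullet> xs + b)" unfolding J_def using a0act by auto
      have "((\<lambda>y. (a0 \<bullet> y + b0) - (a \<bullet> y + b)) \<longlongrightarrow> (a0 \<bullet> xs + b0) - (a \<bullet> xs + b)) (nhds xs)"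
        by (intro tendsto_intros) (auto simp: filterlim_ident)
      from order_tendstoD(1)[OF this lt]
      show "eventually (\<lambda>y. (\<lambda>(a, b). a \<bullet> y + b < a0 \<bullet> y + b0) ab0) (nhds xs)"
        unfolding abe by (rule eventually_mono) simp
    qed
  qed
  then obtain \<rho> where rho0: "\<rho> > 0" and rho: "\<And>y a b. dist y xs < \<rho> \<Longrightarrow> (a, b) \<in> A - J \<Longrightarrow> a \<bullet> y + b < a0 \<bullet> y + b0"
    unfolding eventually_nhds_metric by fastforce
  have phiM: "\<phi> y = a0 \<bullet> y + b0" if y: "dist y xs < \<rho>" "y - xs \<in> T" for y
  proof (rule poly_eq[OF fA phi a0A])
    fix a b assume ab: "(a, b) \<in> A"
    show "a \<bullet> y + b \<le> a0 \<bullet> y + b0"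
    proof (cases "(a, b) \<in> J")
      case True
      have "a \<bullet> y + b = (a \<bullet> xs + b) + a \<bullet> (y - xs)" by (simp add: inner_diff_right)
      also have "\<dots> = (a0 \<bullet> xs + b0) + a0 \<bullet> (y - xs)" using True aT[OF True y(2)] a0act unfolding J_def by simp
      also have "\<dots> = a0 \<bullet> y + b0" by (simp add: inner_diff_right)
      finally show ?thesis by simp
    next
      case False
      then show ?thesis using rho[OF y(1), of a b] ab by auto
    qed
  qed
  have subdM: "subdiff \<phi> y = C" if y: "dist y xs < \<rho>/2" "y - xs \<in> T" for y
  proof -
    define w where "w = y - xs"
    have w: "w \<in> T" using y unfolding w_def by simp
    have phiy: "\<phi> y = \<phi> xs + a0 \<bullet> w"
      using phiM[of y] y rho0 a0act unfolding w_def by (simp add: inner_diff_right)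
    show ?thesis
    proof
      show "C \<subseteq> subdiff \<phi> y"
      proof
        fix g assume g: "g \<in> C"
        have gw: "g \<bullet> w = a0 \<bullet> w" by (rule gT[OF g w])
        show "g \<in> subdiff \<phi> y" unfolding subdiff_def
        proof (safe)
          fix u
          have "\<phi> u \<ge> \<phi> xs + g \<bullet> (u - xs)" using g unfolding C_def subdiff_def by blast
          then show "\<phi> y + g \<bullet> (u - y) \<le> \<phi> u" using phiy gw unfolding w_def
            by (simp add: inner_diff_right)
        qed
      qed
    next
      show "subdiff \<phi> y \<subseteq> C"
      proof
        fix g assume g: "g \<in> subdiff \<phi> y"
        have "\<phi> xs \<ge> \<phi> y + g \<bullet> (xs - y)" using g unfolding subdiff_def by blast
        then have ge: "g \<bullet> w \<ge> a0 \<bullet> w" using phiy unfolding w_def by (simp add: inner_diff_right)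
        have u2: "dist (xs + 2 *\<^sub>R w) xs < \<rho>" using y unfolding w_def by (simp add: dist_norm)
        have "\<phi> (xs + 2 *\<^sub>R w) = a0 \<bullet> (xs + 2 *\<^sub>R w) + b0" using phiM[OF u2] w Tsub
          by (simp add: subspace_scale)
        then have "\<phi> (xs + 2 *\<^sub>R w) = \<phi> xs + 2 * (a0 \<bullet> w)" using a0act by (simp add: inner_add_right)
        moreover have "\<phi> (xs + 2 *\<^sub>R w) \<ge> \<phi> y + g \<bullet> ((xs + 2 *\<^sub>R w) - y)" using g unfolding subdiff_def by blast
        moreover have "(xs + 2 *\<^sub>R w) - y = w" unfolding w_def by (simp add: algebra_simps scaleR_2)
        ultimately have le: "g \<bullet> w \<le> a0 \<bullet> w" using phiy by simp
        have gw: "g \<bullet> w = a0 \<bullet> w" using ge le by simp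
        show "g \<in> C" unfolding C_def subdiff_def
        proof (safe)
          fix u
          have "\<phi> u \<ge> \<phi> y + g \<bullet> (u - y)" using g unfolding subdiff_def by blast
          then show "\<phi> xs + g \<bullet> (u - xs) \<le> \<phi> u" using phiy gw unfolding w_def
            by (simp add: inner_diff_right)
        qed
      qed
    qed
  qed
  have Gam: "ereal \<rho> \<le> Gamma (\<lambda>x. f x + \<phi> x) xs"
    unfolding Gamma_def
  proof (rule Inf_greatest)
    fix y assume "y \<in> {Gamma_max (\<lambda>x. f x + \<phi> x) xs d | d. norm d = 1}"
    then obtain d where y: "y = Gamma_max (\<lambda>x. f x + \<phi> x) xs d" and nd: "norm d = 1" by blast
    have fJ: "finite J" using fA unfolding J_def by (rule finite_subset[rotated]) auto
    have "Max ((\<lambda>(a, b). a \<bullet> d) ` J) \<in> (\<lambda>(a, b). a \<bullet> d) ` J" using fJ a0J by (intro Max_in) auto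
    then obtain aj bj where ajJ: "(aj, bj) \<in> J" and ajmax: "aj \<bullet> d = Max ((\<lambda>(a, b). a \<bullet> d) ` J)" by auto
    have ajge: "a \<bullet> d \<le> aj \<bullet> d" if "(a, b) \<in> J" for a b
      unfolding ajmax using fJ that by (intro Max_ge) force+
    have phiray: "\<phi> (xs + t *\<^sub>R d) = aj \<bullet> (xs + t *\<^sub>R d) + bj" if t: "t \<in> {0<..<\<rho>}" for t
    proof (rule poly_eq[OF fA phi])
      show "(aj, bj) \<in> A" using ajJ unfolding J_def by simp
      have Jle: "a \<bullet> (xs + t *\<^sub>R d) + b \<le> aj \<bullet> (xs + t *\<^sub>R d) + bj" if "(a, b) \<in> J" for a b
      proof -
        have "a \<bullet> (xs + t *\<^sub>R d) + b = \<phi> xs + t * (a \<bullet> d)" using that unfolding J_def by (simp add: inner_add_right)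
        also have "\<dots> \<le> \<phi> xs + t * (aj \<bullet> d)" using ajge[OF that] t by (simp add: mult_left_mono)
        also have "\<dots> = aj \<bullet> (xs + t *\<^sub>R d) + bj" using ajJ unfolding J_def by (simp add: inner_add_right)
        finally show ?thesis .
      qed
      fix a b assume ab: "(a, b) \<in> A"
      show "a \<bullet> (xs + t *\<^sub>R d) + b \<le> aj \<bullet> (xs + t *\<^sub>R d) + bj"
      proof (cases "(a, b) \<in> J")
        case True then show ?thesis by (rule Jle)
      next
        case False
        have "dist (xs + t *\<^sub>R d) xs < \<rho>" using t nd by (simp add: dist_norm)
        then have "a \<bullet> (xs + t *\<^sub>R d) + b < a0 \<bullet> (xs + t *\<^sub>R d) + b0" using rho ab False by blast
        also have "\<dots> \<le> aj \<bullet> (xs + t *\<^sub>R d) + bj" by (rule Jle[OF a0J])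
        finally show ?thesis by simp
      qed
    qed
    define D where "D t = G (xs + t *\<^sub>R d) \<bullet> d + aj \<bullet> d" for t
    have C1: "(\<lambda>t. f (xs + t *\<^sub>R d) + \<phi> (xs + t *\<^sub>R d)) C1_differentiable_on {0<..<\<rho>}"
      unfolding C1_differentiable_on_def
    proof (intro exI[of _ D] conjI ballI)
      fix t assume t: "t \<in> {0<..<\<rho>}"
      have k1: "((\<lambda>t. f (xs + t *\<^sub>R d)) has_real_derivative g' (xs + t *\<^sub>R d) d) (at t)"
        by (rule line_deriv[OF d1]) simp
      have k2: "((\<lambda>t. aj \<bullet> (xs + t *\<^sub>R d) + bj) has_real_derivative aj \<bullet> d) (at t)"
        by (rule line_deriv[where F = "\<lambda>u. aj \<bullet> u + bj" and F' = "\<lambda>h. aj \<bullet> h"])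
          (auto intro!: derivative_eq_intros)
      have k: "((\<lambda>t. f (xs + t *\<^sub>R d) + (aj \<bullet> (xs + t *\<^sub>R d) + bj)) has_real_derivative D t) (at t)"
        using DERIV_add[OF k1 k2] unfolding D_def gG .
      then have "((\<lambda>t. f (xs + t *\<^sub>R d) + (aj \<bullet> (xs + t *\<^sub>R d) + bj)) has_vector_derivative D t) (at t)"
        by (simp add: has_real_derivative_iff_has_vector_derivative)
      then show "((\<lambda>t. f (xs + t *\<^sub>R d) + \<phi> (xs + t *\<^sub>R d)) has_vector_derivative D t) (at t)"
        unfolding has_vector_derivative_def
        by (rule has_derivative_transform_within_open[OF _ open_greaterThanLessThan t]) (simp add: phiray)
    next
      show "continuous_on {0<..<\<rho>} D" unfolding D_def
        by (intro continuous_intros continuous_on_compose2[OF contG]) auto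
    qed
    then have "ereal \<rho> \<in> {ereal T | T. T > 0 \<and> (\<lambda>t. f (xs + t *\<^sub>R d) + \<phi> (xs + t *\<^sub>R d)) C1_differentiable_on {0<..<T}}"
      using rho0 by blast
    then show "ereal \<rho> \<le> y" unfolding y Gamma_max_def by (rule Sup_upper)
  qed
  have "isCont G xs" using contG by (simp add: continuous_on_eq_continuous_at)
  moreover have "e/2 > 0" using e by simp
  ultimately obtain r1 where r1: "r1 > 0" and r1c: "\<And>x. dist x xs < r1 \<Longrightarrow> dist (G x) (G xs) < e/2"
    unfolding continuous_at_eps_delta by blast
  define r0 where "r0 = min (\<rho>/4) r1"
  have r0: "r0 > 0" unfolding r0_def using rho0 r1 by simp
  have PP: "P (P u) = P u" for u unfolding P_def by (rule proj_idem[OF Tsub])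
  have Psa: "P u \<bullet> v = u \<bullet> P v" for u v unfolding P_def by (rule proj_sa[OF Tsub])
  have PT: "P w = w" if "w \<in> T" for w unfolding P_def using proj_id[OF Tsub that] .
  have PinT: "P u \<in> T" for u unfolding P_def by (rule proj_in[OF Tsub])
  have Porth: "(u - P u) \<bullet> P v = 0" for u v unfolding P_def by (rule proj_orth[OF Tsub proj_in[OF Tsub]])
  have Pnorm: "norm (P u) \<le> norm u" for u unfolding P_def by (rule proj_norm[OF Tsub])
  have Pnorm2: "norm (u - P u) \<le> norm u" for u
    using closest_point_le[OF closed_subspace[OF Tsub] subspace_0[OF Tsub], of u]
    unfolding P_def by (simp add: dist_norm)
  show ?thesis
  proof (intro exI[of _ r0] conjI ballI)
    show "r0 > 0" by (rule r0)
    have "r0 < \<rho>" unfolding r0_def using rho0 by simp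
    then have "ereal r0 < ereal \<rho>" by simp
    then show "ereal r0 < Gamma (\<lambda>x. f x + \<phi> x) xs" using Gam by (rule less_le_trans)
    fix x assume x: "x \<in> ball xs r0 \<inter> M"
    then have xM: "x \<in> M" and dx: "dist x xs < r0" by (auto simp: dist_commute)
    have xT: "x - xs \<in> T" by (rule TM[OF xM])
    have dx4: "dist x xs < \<rho>/4" and dx1: "dist x xs < r1" using dx unfolding r0_def by auto
    have "dist x xs < \<rho>/2" using dx4 rho0 by simp
    then have sdx: "subdiff \<phi> x = C" using xT by (intro subdM)
    define p where "p = closest_point C (- G x)"
    have pC: "p \<in> C" unfolding p_def by (rule closest_point_in_set[OF Cclosed Cne])
    have "dist (- G x) p \<le> dist (- G x) q0" unfolding p_def by (rule closest_point_le[OF Cclosed q0C])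
    moreover have "dist (- G x) q0 < e/2" unfolding q0_def using r1c[of x] dx unfolding r0_def
      by (simp add: dist_minus)
    ultimately have dpq0: "dist p q0 < e"
      using dist_triangle[of p q0 "- G x"] by (simp add: dist_commute)
    define z where "z = x + (1/lam) *\<^sub>R p"
    have tauz: "tau (\<lambda>v. lam *\<^sub>R v) f \<phi> x = z"
      unfolding tau_lam[OF lam_pos] gradG sdx z_def p_def ..
    define \<delta> where "\<delta> = min (\<rho>/4) ((e - dist p q0)/lam)"
    have \<delta>0: "\<delta> > 0" unfolding \<delta>_def using rho0 dpq0 lam_pos by simp
    have proxloc: "x + P (z' - z) = prox (\<lambda>v. lam *\<^sub>R v) \<phi> z'" if z': "z' \<in> ball z \<delta>" for z'
    proof -
      define u where "u = z' - z"
      define y where "y = x + P u"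
      have nu: "norm u < \<delta>" using z' unfolding u_def by (simp add: dist_norm norm_minus_commute)
      have yT: "y - xs \<in> T" unfolding y_def using subspace_add[OF Tsub xT PinT[of u]] by (simp add: algebra_simps)
      have "dist y xs \<le> norm (x - xs) + norm (P u)" unfolding y_def dist_norm
        by (metis add.commute add_diff_eq norm_triangle_ineq)
      also have "\<dots> < \<rho>/4 + \<rho>/4" using dx Pnorm[of u] nu unfolding r0_def \<delta>_def dist_norm by simp
      finally have dy: "dist y xs < \<rho>/2" by simp
      have sdy: "subdiff \<phi> y = C" by (rule subdM[OF dy yT])
      define v where "v = lam *\<^sub>R (u - P u)"
      have vpar: "v \<in> par C" unfolding v_def P_def
        using subspace_scale[OF parsub proj_perp[OF Tsub, of u, unfolded perpT]] .
      have "norm v \<le> lam * norm u" unfolding v_def using Pnorm2[of u] lam_pos by (simp add: mult_left_mono)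
      also have "\<dots> < lam * \<delta>" using nu lam_pos by simp
      also have "\<dots> \<le> e - dist p q0" unfolding \<delta>_def using lam_pos by (simp add: min_def field_simps)
      finally have nv: "norm v < e - dist p q0" .
      have "dist q0 (p + v) \<le> dist q0 p + norm v"
        by (metis dist_norm dist_triangle add_diff_cancel_left' norm_minus_commute)
      then have "p + v \<in> ball q0 e" using nv by (simp add: dist_commute)
      moreover have "p + v \<in> affine hull C" by (rule aff_par[OF pC vpar])
      ultimately have pvC: "p + v \<in> C" using eball by blast
      have "lam *\<^sub>R (z' - y) = p + v"
        unfolding y_def v_def u_def z_def using lam_pos by (simp add: algebra_simps)
      then have "lam *\<^sub>R (z' - y) \<in> subdiff \<phi> y" using pvC sdy by simp
      from prox_min[OF lam_pos this] show ?thesis unfolding y_def u_def by simp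
    qed
    have h1: "((\<lambda>z'. z' - z) has_derivative (\<lambda>h. h)) (at z)" by (auto intro!: derivative_eq_intros)
    have h2: "((\<lambda>z'. P (z' - z)) has_derivative P) (at z)" using bounded_linear.has_derivative[OF Pbl h1] .
    have h3: "((\<lambda>z'. x + P (z' - z)) has_derivative P) (at z)"
      using has_derivative_add[OF has_derivative_const h2] by simp
    have dprox: "(prox (\<lambda>v. lam *\<^sub>R v) \<phi> has_derivative P) (at z)"
      by (rule has_derivative_transform_within_open[OF h3 open_ball]) (use \<delta>0 proxloc in auto)
    define DF where "DF h = Hf x (P h) + lam *\<^sub>R (h - P h)" for h
    have xz: "x + P (z - z) = x" using linear_0[OF Pl] by simp
    have k1: "((\<lambda>z'. G (x + P (z' - z))) has_derivative (\<lambda>h. Hf x (P h))) (at z)"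
      using has_derivative_compose[OF h3 dG[of "x + P (z - z)"]] unfolding xz .
    have k2: "((\<lambda>z'. lam *\<^sub>R (z' - (x + P (z' - z)))) has_derivative (\<lambda>h. lam *\<^sub>R (h - P h))) (at z)"
      using has_derivative_scaleR_right[OF has_derivative_diff[OF has_derivative_ident h3]] .
    have k: "((\<lambda>z'. G (x + P (z' - z)) + lam *\<^sub>R (z' - (x + P (z' - z)))) has_derivative DF) (at z)"
      using has_derivative_add[OF k1 k2] unfolding DF_def .
    have zb: "z \<in> ball z \<delta>" using \<delta>0 by simp
    have eqF: "G (x + P (z' - z)) + lam *\<^sub>R (z' - (x + P (z' - z))) = Fnor (\<lambda>v. lam *\<^sub>R v) f \<phi> z'"
      if "z' \<in> ball z \<delta>" for z'
      unfolding Fnor_def gradG proxloc[OF that] ..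
    have dF: "(Fnor (\<lambda>v. lam *\<^sub>R v) f \<phi> has_derivative DF) (at z)"
      using has_derivative_transform_within_open[OF k open_ball zb eqF] .
    have DFl: "linear DF" using has_derivative_bounded_linear[OF dF] by (rule bounded_linear.linear)
    have PDF: "P (DF u) = P (Hf x (P u))" for u
    proof -
      have "P (DF u) = P (Hf x (P u)) + lam *\<^sub>R (P u - P (P u))"
        unfolding DF_def by (simp add: linear_add[OF Pl] linear_scale[OF Pl] linear_diff[OF Pl])
      then show ?thesis using PP by simp
    qed
    have RH: "is_riem_hessian M (\<lambda>y. f y + \<phi> y) x (P \<circ> DF)"
      unfolding is_riem_hessian_def projM_eq T_def[symmetric]
    proof (intro conjI allI ballI)
      show "linear (P \<circ> DF)" by (rule linear_compose[OF DFl Pl])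
      fix u v
      show "(P \<circ> DF) u \<bullet> v = u \<bullet> (P \<circ> DF) v"
      proof -
        have "(P \<circ> DF) u \<bullet> v = Hf x (P u) \<bullet> P v" by (simp add: PDF Psa)
        also have "\<dots> = Hf x (P v) \<bullet> P u" by (rule Hsym)
        also have "\<dots> = u \<bullet> (P \<circ> DF) v" by (simp add: PDF Psa[symmetric] inner_commute)
        finally show ?thesis .
      qed
    next
      show "P \<circ> DF = P \<circ> (P \<circ> DF) \<circ> P" by (simp add: fun_eq_iff PDF PP)
    next
      fix \<xi> \<eta> assume \<xi>: "\<xi> \<in> T" and \<eta>: "\<eta> \<in> T"
      define gg where "gg s = G (x + s *\<^sub>R \<xi>) \<bullet> \<eta> + a0 \<bullet> \<eta>" for s
      show "\<exists>g. (\<forall>\<^sub>F s in nhds 0. ((\<lambda>t. f (x + s *\<^sub>R \<xi> + t *\<^sub>R \<eta>) + \<phi> (x + s *\<^sub>R \<xi> + t *\<^sub>R \<eta>))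
          has_real_derivative g s) (at 0)) \<and> (g has_real_derivative \<xi> \<bullet> (P \<circ> DF) \<eta>) (at 0)"
      proof (intro exI[of _ gg] conjI)
        have "((\<lambda>s. dist (x + s *\<^sub>R \<xi>) xs) \<longlongrightarrow> dist (x + 0 *\<^sub>R \<xi>) xs) (nhds 0)"
          by (intro tendsto_intros) (auto simp: filterlim_ident)
        moreover have "dist (x + 0 *\<^sub>R \<xi>) xs < \<rho>/2" using dx4 rho0 by simp
        ultimately have evs: "eventually (\<lambda>s. dist (x + s *\<^sub>R \<xi>) xs < \<rho>/2) (nhds 0)"
          by (rule order_tendstoD(2))
        show "\<forall>\<^sub>F s in nhds 0. ((\<lambda>t. f (x + s *\<^sub>R \<xi> + t *\<^sub>R \<eta>) + \<phi> (x + s *\<^sub>R \<xi> + t *\<^sub>R \<eta>))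
          has_real_derivative gg s) (at 0)"
        proof (rule eventually_mono[OF evs])
          fix s assume s: "dist (x + s *\<^sub>R \<xi>) xs < \<rho>/2"
          define y where "y = x + s *\<^sub>R \<xi>"
          have yT: "y - xs \<in> T" unfolding y_def
            using subspace_add[OF Tsub xT subspace_scale[OF Tsub \<xi>, of s]] by (simp add: algebra_simps)
          have "((\<lambda>t. dist (y + t *\<^sub>R \<eta>) xs) \<longlongrightarrow> dist (y + 0 *\<^sub>R \<eta>) xs) (nhds 0)"
            by (intro tendsto_intros) (auto simp: filterlim_ident)
          moreover have "dist (y + 0 *\<^sub>R \<eta>) xs < \<rho>" using s rho0 unfolding y_def by simp
          ultimately have ev2: "eventually (\<lambda>t. dist (y + t *\<^sub>R \<eta>) xs < \<rho>) (nhds 0)"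
            by (rule order_tendstoD(2))
          have eq: "eventually (\<lambda>t. f (y + t *\<^sub>R \<eta>) + (a0 \<bullet> (y + t *\<^sub>R \<eta>) + b0)
              = f (y + t *\<^sub>R \<eta>) + \<phi> (y + t *\<^sub>R \<eta>)) (nhds 0)"
          proof (rule eventually_mono[OF ev2])
            fix t assume t: "dist (y + t *\<^sub>R \<eta>) xs < \<rho>"
            have "y + t *\<^sub>R \<eta> - xs \<in> T"
              using subspace_add[OF Tsub yT subspace_scale[OF Tsub \<eta>, of t]] by (simp add: algebra_simps)
            then show "f (y + t *\<^sub>R \<eta>) + (a0 \<bullet> (y + t *\<^sub>R \<eta>) + b0) = f (y + t *\<^sub>R \<eta>) + \<phi> (y + t *\<^sub>R \<eta>)"
              using phiM[OF t] by simp
          qed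
          have k1: "((\<lambda>t. f (y + t *\<^sub>R \<eta>)) has_real_derivative g' y \<eta>) (at 0)"
            by (rule line_deriv[OF d1]) simp
          have k2: "((\<lambda>t. a0 \<bullet> (y + t *\<^sub>R \<eta>) + b0) has_real_derivative a0 \<bullet> \<eta>) (at 0)"
            by (rule line_deriv[where F = "\<lambda>u. a0 \<bullet> u + b0" and F' = "\<lambda>h. a0 \<bullet> h"])
              (auto intro!: derivative_eq_intros)
          have "((\<lambda>t. f (y + t *\<^sub>R \<eta>) + (a0 \<bullet> (y + t *\<^sub>R \<eta>) + b0)) has_real_derivative gg s) (at 0)"
            using DERIV_add[OF k1 k2] unfolding gg_def gG y_def .
          then show "((\<lambda>t. f (x + s *\<^sub>R \<xi> + t *\<^sub>R \<eta>) + \<phi> (x + s *\<^sub>R \<xi> + t *\<^sub>R \<eta>))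
              has_real_derivative gg s) (at 0)"
            unfolding y_def[symmetric] using DERIV_cong_ev[OF refl eq refl] by simp
        qed
        have dGi: "((\<lambda>u. G u \<bullet> \<eta>) has_derivative (\<lambda>h. Hf x h \<bullet> \<eta>)) (at x)"
          using bounded_linear.has_derivative[OF bounded_linear_inner_left dG[of x]] .
        have "((\<lambda>s. G (x + s *\<^sub>R \<xi>) \<bullet> \<eta>) has_real_derivative Hf x \<xi> \<bullet> \<eta>) (at 0)"
          by (rule line_deriv[OF dGi]) simp
        from DERIV_add[OF this DERIV_const[of "a0 \<bullet> \<eta>"]]
        have "(gg has_real_derivative Hf x \<xi> \<bullet> \<eta>) (at 0)" unfolding gg_def by simp
        moreover have "\<xi> \<bullet> (P \<circ> DF) \<eta> = Hf x \<xi> \<bullet> \<eta>"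
        proof -
          have "\<xi> \<bullet> (P \<circ> DF) \<eta> = P \<xi> \<bullet> Hf x (P \<eta>)" by (simp add: PDF Psa)
          also have "\<dots> = Hf x \<eta> \<bullet> \<xi>" using PT[OF \<xi>] PT[OF \<eta>] by (simp add: inner_commute)
          also have "\<dots> = Hf x \<xi> \<bullet> \<eta>" by (rule Hsym)
          finally show ?thesis .
        qed
        ultimately show "(gg has_real_derivative \<xi> \<bullet> (P \<circ> DF) \<eta>) (at 0)" by simp
      qed
    qed
    show "let \<Lambda> = (\<lambda>v. lam *\<^sub>R v); z = tau \<Lambda> f \<phi> x in
              \<exists>V DF. (prox \<Lambda> \<phi> has_derivative V) (at z) \<and>
                     (Fnor \<Lambda> f \<phi> has_derivative DF) (at z) \<and>
                     is_riem_hessian M (\<lambda>y. f y + \<phi> y) x (V \<circ> DF)"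
      unfolding Let_def tauz using dprox dF RH by blast
  qed
qed

end
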